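(* Let $G$ be a tree on $k$ vertices, $n\ge 1$, $e=(s,t)$ an edge of $G$, and let $\{u,v\}$ be one of the two special edges $\{s^n,t^n\}$, $\{s^{n-1}t,\,t^{n-1}s\}$ of the unique $e$-cycle of length $2^n$ in $\Gamma^G_n$. Then $$n(u,v)\,n(v,u)=n_G(s,t)\,n_G(t,s)\,k^{2(n-1)}=n_G(s,t)k^{n-1}\left(k^n-n_G(s,t)k^{n-1}\right)=n_G(t,s)k^{n-1}\left(k^n-n_G(t,s)k^{n-1}\right),$$ where $n_G(s,t)$ is the number of vertices of $G$ closer to $s$ than to $t$.
   Context: Let $G=(V,E)$ be a finite tree with vertex set $V$ of size $k$, and fix an orientation of each edge, so that each edge becomes an ordered pair $e=(s,t)$. Each oriented edge $e=(s,t)$ acts on the set $V^*$ of finite words over the alphabet $V$ by the recursive rule: $e(\emptyset)=\emptyset$, $e(sw)=t\,e(w)$, $e(tw)=sw$, and $e(xw)=xw$ for $x\in V\setminus\{s,t\}$ (words are read left to right, $w\in V^*$). This action preserves word length. For $n\ge 1$, the Schreier graph $\Gamma_n^G$ is the multigraph with vertex set $V^n$ having, for each $u\in V^n$ and each oriented edge $e$ of $G$, one edge joining $u$ and $e(u)$, labelled $e$ (a loop if $e(u)=u$). The orbit of $s^n$ under $e$ is $\{s,t\}^n$, forming with its $e$-labelled edges the unique $e$-cycle of length $2^n$. For vertices $u,v$ of a graph $H$, $n(u,v)$ (resp. $n_G(u,v)$ in $G$) is the number of vertices strictly closer in graph distance to $u$ than to $v$. *)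

theory Defs
  imports Main "HOL-Library.Extended_Nat"
begin

text \<open>A finite tree on vertex set V whose edges are oriented: E is a set of ordered
pairs (s,t); the underlying undirected graph (each undirected edge oriented exactly once)
is a tree.\<close>

definition und_adj :: "('a \<times> 'a) set \<Rightarrow> ('a \<times> 'a) set" where
  "und_adj E = E \<union> converse E"

definition oriented_tree :: "'a set \<Rightarrow> ('a \<times> 'a) set \<Rightarrow> bool" where
  "oriented_tree V E \<longleftrightarrow> finite V \<and> V \<noteq> {} \<and> E \<subseteq> V \<times> V
     \<and> (\<forall>s t. (s,t) \<in> E \<longrightarrow> s \<noteq> t \<and> (t,s) \<notin> E)
     \<and> (\<forall>x\<in>V. \<forall>y\<in>V. (x,y) \<in> (und_adj E)\<^sup>*)
     \<and> card E = card V - 1"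

fun edge_act :: "'a \<times> 'a \<Rightarrow> 'a list \<Rightarrow> 'a list" where
  "edge_act e [] = []"
| "edge_act (s,t) (x # w) =
     (if x = s then t # edge_act (s,t) w else if x = t then s # w else x # w)"

definition words :: "'a set \<Rightarrow> nat \<Rightarrow> 'a list set" where
  "words V n = {w. length w = n \<and> set w \<subseteq> V}"

text \<open>Adjacency of the Schreier graph \<Gamma>_n (loops/multiplicities irrelevant for distance).\<close>
definition schreier_adj :: "'a set \<Rightarrow> ('a \<times> 'a) set \<Rightarrow> nat \<Rightarrow> ('a list \<times> 'a list) set" where
  "schreier_adj V E n = {(u, w). u \<in> words V n \<and> w \<in> words V n \<and>
      (\<exists>e\<in>E. edge_act e u = w \<or> edge_act e w = u)}"

text \<open>Graph distance for an adjacency relation R (infinite if unreachable).\<close>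
definition gdist :: "('b \<times> 'b) set \<Rightarrow> 'b \<Rightarrow> 'b \<Rightarrow> enat" where
  "gdist R x y = (INF m \<in> {m. (x, y) \<in> R ^^ m}. enat m)"

definition ncloser :: "'b set \<Rightarrow> ('b \<times> 'b) set \<Rightarrow> 'b \<Rightarrow> 'b \<Rightarrow> nat" where
  "ncloser Vs R u v = card {w \<in> Vs. gdist R w u < gdist R w v}"

definition nG :: "'a set \<Rightarrow> ('a \<times> 'a) set \<Rightarrow> 'a \<Rightarrow> 'a \<Rightarrow> nat" where
  "nG V E s t = ncloser V (und_adj E) s t"

definition nGamma :: "'a set \<Rightarrow> ('a \<times> 'a) set \<Rightarrow> nat \<Rightarrow> 'a list \<Rightarrow> 'a list \<Rightarrow> nat" where
  "nGamma V E n u v = ncloser (words V n) (schreier_adj V E n) u v"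

end

theory Submission
  imports Defs
begin

lemma gdist_le: "(x,y) \<in> R ^^ m \<Longrightarrow> gdist R x y \<le> enat m"
  unfolding gdist_def by (rule INF_lower2[of m]) auto

lemma gdist_ge: "(\<And>m. (x,y) \<in> R ^^ m \<Longrightarrow> d \<le> m) \<Longrightarrow> enat d \<le> gdist R x y"
  unfolding gdist_def by (rule INF_greatest) auto

lemma gdist_attained:
  assumes "(x,y) \<in> R\<^sup>*"
  shows "\<exists>m. (x,y) \<in> R ^^ m \<and> gdist R x y = enat m"
proof -
  from assms obtain m0 where m0: "(x,y) \<in> R ^^ m0" using rtrancl_power by blast
  define m where "m = (LEAST m. (x,y) \<in> R ^^ m)"
  have mR: "(x,y) \<in> R ^^ m" unfolding m_def by (rule LeastI[where P="\<lambda>m. (x,y) \<in> R ^^ m", OF m0])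
  have "gdist R x y = enat m"
  proof (rule antisym)
    show "gdist R x y \<le> enat m" using gdist_le[OF mR] .
    show "enat m \<le> gdist R x y" by (rule gdist_ge) (simp add: m_def Least_le)
  qed
  with mR show ?thesis by blast
qed

lemma gdist_infty: "(x,y) \<notin> R\<^sup>* \<Longrightarrow> gdist R x y = \<infinity>"
  proof -
  assume "(x,y) \<notin> R\<^sup>*"
  then have "{m. (x,y) \<in> R ^^ m} = {}" using rtrancl_power by blast
  then show ?thesis unfolding gdist_def by (simp add: top_enat_def)
qed

lemma gdist_triangle: "gdist R x z \<le> gdist R x y + gdist R y z"
proof (cases "(x,y) \<in> R\<^sup>* \<and> (y,z) \<in> R\<^sup>*")
  case True
  then obtain i j where i: "(x,y) \<in> R ^^ i" "gdist R x y = enat i"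
    and j: "(y,z) \<in> R ^^ j" "gdist R y z = enat j" using gdist_attained by metis
  have "(x,z) \<in> R ^^ (i + j)" using i j relpow_add by blast
  then have "gdist R x z \<le> enat (i+j)" by (rule gdist_le)
  then show ?thesis using i j by simp
next
  case False
  then show ?thesis using gdist_infty by fastforce
qed

lemma path_cross:
  assumes "(x,y) \<in> R ^^ m" "x \<in> A" "y \<notin> A"
  shows "\<exists>i a b. i < m \<and> (x,a) \<in> R ^^ i \<and> a \<in> A \<and> (a,b) \<in> R \<and> b \<notin> A \<and> (b,y) \<in> R ^^ (m - 1 - i)"
  using assms
proof (induction m arbitrary: x)
  case 0
  then show ?case by auto
next
  case (Suc m)
  from relpow_Suc_D2[OF Suc.prems(1)] obtain z where z: "(x,z) \<in> R" "(z,y) \<in> R ^^ m" by blast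
  show ?case
  proof (cases "z \<in> A")
    case False
    then show ?thesis using z Suc.prems by (intro exI[of _ 0] exI[of _ x] exI[of _ z]) auto
  next
    case True
    from Suc.IH[OF z(2) True Suc.prems(3)] obtain i a b where
      h: "i < m" "(z,a) \<in> R ^^ i" "a \<in> A" "(a,b) \<in> R" "b \<notin> A" "(b,y) \<in> R ^^ (m - 1 - i)" by blast
    have "(x,a) \<in> R ^^ Suc i" using relpow_Suc_I2[OF z(1) h(2)] .
    then show ?thesis using h by (intro exI[of _ "Suc i"] exI[of _ a] exI[of _ b]) auto
  qed
qed

lemma closer_one:
  assumes wA: "w \<in> A" and b1: "b1 \<notin> A"
    and conn: "(w,b1) \<in> R\<^sup>*"
    and cross: "\<And>x y. (x,y) \<in> R \<Longrightarrow> x \<in> A \<Longrightarrow> y \<notin> A \<Longrightarrow> (x = a1 \<and> y = b1) \<or> (x = a2 \<and> y = b2)"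
    and dist: "gdist R a2 a1 \<le> gdist R b2 b1"
  shows "gdist R w a1 < gdist R w b1"
proof -
  obtain m where m: "(w,b1) \<in> R ^^ m" "gdist R w b1 = enat m" using gdist_attained[OF conn] by blast
  from path_cross[OF m(1) wA b1] obtain i a b where
    h: "i < m" "(w,a) \<in> R ^^ i" "a \<in> A" "(a,b) \<in> R" "b \<notin> A" "(b,b1) \<in> R ^^ (m - 1 - i)" by blast
  from cross[OF h(4) h(3) h(5)] show ?thesis
  proof
    assume "a = a1 \<and> b = b1"
    then have "gdist R w a1 \<le> enat i" using gdist_le[OF h(2)] by simp
    then show ?thesis using m h(1) by (simp add: le_less_trans)
  next
    assume ab: "a = a2 \<and> b = b2"
    have "gdist R w a1 \<le> gdist R w a2 + gdist R a2 a1" by (rule gdist_triangle)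
    also have "\<dots> \<le> enat i + gdist R b2 b1" using gdist_le[OF h(2)] ab dist by (simp add: add_mono)
    also have "\<dots> \<le> enat i + enat (m - 1 - i)" using gdist_le[OF h(6)] ab by (metis add_left_mono)
    also have "\<dots> < enat m" using h(1) by simp
    finally show ?thesis using m by simp
  qed
qed

lemma closer_sets:
  assumes RX: "R \<subseteq> X \<times> X" and symR: "\<And>x y. (x,y) \<in> R \<Longrightarrow> (y,x) \<in> R"
    and conn: "\<And>x y. x \<in> X \<Longrightarrow> y \<in> X \<Longrightarrow> (x,y) \<in> R\<^sup>*"
    and AX: "A \<subseteq> X" and a1: "a1 \<in> A" and b1: "b1 \<in> X - A"
    and cross: "\<And>x y. (x,y) \<in> R \<Longrightarrow> x \<in> A \<Longrightarrow> y \<notin> A \<Longrightarrow> (x = a1 \<and> y = b1) \<or> (x = a2 \<and> y = b2)"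
    and dist1: "gdist R a2 a1 \<le> gdist R b2 b1"
    and dist2: "gdist R b2 b1 \<le> gdist R a2 a1"
  shows "{w \<in> X. gdist R w a1 < gdist R w b1} = A"
    and "{w \<in> X. gdist R w b1 < gdist R w a1} = X - A"
proof -
  have one: "gdist R w a1 < gdist R w b1" if "w \<in> A" for w
    using closer_one[of w A b1 R a1 a2 b2] that b1 AX conn a1 cross dist1 by blast
  have cross2: "(x = b1 \<and> y = a1) \<or> (x = b2 \<and> y = a2)"
    if "(x,y) \<in> R" "x \<in> X - A" "y \<notin> X - A" for x y
  proof -
    have "y \<in> X" using that(1) RX by auto
    then have "y \<in> A" using that(3) by auto
    then show ?thesis using cross[OF symR[OF that(1)]] that(2) by auto
  qed
  have two: "gdist R w b1 < gdist R w a1" if "w \<in> X - A" for w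
    using closer_one[of w "X - A" a1 R b1 b2 a2] that b1 AX conn a1 cross2 dist2 by blast
  show "{w \<in> X. gdist R w a1 < gdist R w b1} = A"
    using one two AX by (auto dest: less_asym)
  show "{w \<in> X. gdist R w b1 < gdist R w a1} = X - A"
    using one two AX by (auto dest: less_asym)
qed

lemma und_adj_sym: "(x,y) \<in> und_adj F \<Longrightarrow> (y,x) \<in> und_adj F"
  by (auto simp: und_adj_def)

lemma und_adj_rtrancl_sym: "(x,y) \<in> (und_adj F)\<^sup>* \<Longrightarrow> (y,x) \<in> (und_adj F)\<^sup>*"
proof -
  have "sym (und_adj F)" by (auto simp: sym_def und_adj_def)
  then have "sym ((und_adj F)\<^sup>*)" by (rule sym_rtrancl)
  then show "(x,y) \<in> (und_adj F)\<^sup>* \<Longrightarrow> (y,x) \<in> (und_adj F)\<^sup>*" by (auto simp: sym_def)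
qed

lemma reach_split:
  assumes "(a,x) \<in> (und_adj F)\<^sup>*"
  shows "(a,x) \<in> (und_adj (F - {(a,b)}))\<^sup>* \<or> (b,x) \<in> (und_adj (F - {(a,b)}))\<^sup>*"
  using assms
proof (induction rule: rtrancl_induct)
  case base
  then show ?case by simp
next
  case (step y z)
  show ?case
  proof (cases "(y,z) \<in> und_adj (F - {(a,b)})")
    case True
    then show ?thesis using step.IH by (meson rtrancl.rtrancl_into_rtrancl)
  next
    case False
    then have "z = a \<or> z = b" using step.hyps(2) by (auto simp: und_adj_def)
    then show ?thesis by auto
  qed
qed

lemma reach_restrict:
  assumes "(a,x) \<in> R\<^sup>*"
  shows "(a,x) \<in> (R \<inter> ({y. (a,y) \<in> R\<^sup>*} \<times> {y. (a,y) \<in> R\<^sup>*}))\<^sup>*"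
  using assms
proof (induction rule: rtrancl_induct)
  case base then show ?case by simp
next
  case (step y z)
  then have "(y,z) \<in> R \<inter> ({y. (a,y) \<in> R\<^sup>*} \<times> {y. (a,y) \<in> R\<^sup>*})"
    by (auto intro: rtrancl_into_rtrancl)
  then show ?case using step.IH by (meson rtrancl.rtrancl_into_rtrancl)
qed

lemma und_adj_inter: "und_adj (F \<inter> (C \<times> C)) = und_adj F \<inter> (C \<times> C)"
  by (auto simp: und_adj_def)

lemma edge_count:
  "finite V \<Longrightarrow> F \<subseteq> V \<times> V \<Longrightarrow> (\<forall>x\<in>V. \<forall>y\<in>V. (x,y) \<in> (und_adj F)\<^sup>*) \<Longrightarrow> card V \<le> card F + 1"
proof (induction "card F" arbitrary: F V rule: less_induct)
  case less
  note finV = less.prems(1) and FV = less.prems(2) and conn = less.prems(3)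
  have finF: "finite F" using FV finV by (meson finite_SigmaI finite_subset)
  show ?case
  proof (cases "F = {}")
    case True
    then have "und_adj F = {}" by (simp add: und_adj_def)
    then have "\<forall>x\<in>V. \<forall>y\<in>V. x = y" using conn by auto
    then have "card V \<le> 1" using finV by (simp add: card_le_Suc0_iff_eq)
    then show ?thesis by simp
  next
    case False
    then obtain a b where ab: "(a,b) \<in> F" by auto
    define F' where "F' = F - {(a,b)}"
    have F'V: "F' \<subseteq> V \<times> V" using FV by (auto simp: F'_def)
    have aV: "a \<in> V" and bV: "b \<in> V" using ab FV by auto
    have cardF': "card F' < card F" unfolding F'_def using ab finF by (meson card_Diff1_less)
    have c1: "card F' = card F - 1" unfolding F'_def using card_Diff_singleton[OF ab] .
    have c2: "card F \<noteq> 0" using ab finF by auto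
    have cardF'': "card F = card F' + 1" using c1 c2 by linarith
    define Va where "Va = {x\<in>V. (a,x) \<in> (und_adj F')\<^sup>*}"
    define Vb where "Vb = {x\<in>V. (b,x) \<in> (und_adj F')\<^sup>*}"
    have VU: "V = Va \<union> Vb"
      using reach_split[of a _ F b] conn aV unfolding Va_def Vb_def F'_def by auto
    show ?thesis
    proof (cases "b \<in> Va")
      case True
      have ab': "(a,b) \<in> (und_adj F')\<^sup>*" using True by (simp add: Va_def)
      have all: "(a,x) \<in> (und_adj F')\<^sup>*" if "x \<in> V" for x
      proof -
        from VU that have "x \<in> Va \<or> x \<in> Vb" by auto
        then show ?thesis
        proof
          assume "x \<in> Va" then show ?thesis by (simp add: Va_def)
        next
          assume "x \<in> Vb" then have "(b,x) \<in> (und_adj F')\<^sup>*" by (simp add: Vb_def)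
          then show ?thesis using rtrancl_trans[OF ab'] by blast
        qed
      qed
      have "\<forall>x\<in>V. \<forall>y\<in>V. (x,y) \<in> (und_adj F')\<^sup>*"
      proof (intro ballI)
        fix x y assume "x \<in> V" "y \<in> V"
        then show "(x,y) \<in> (und_adj F')\<^sup>*"
          using rtrancl_trans[OF und_adj_rtrancl_sym[OF all] all] by blast
      qed
      from less.hyps[OF cardF' finV F'V this] cardF'' show ?thesis by linarith
    next
      case False
      have disj: "Va \<inter> Vb = {}"
      proof (rule ccontr)
        assume "Va \<inter> Vb \<noteq> {}"
        then obtain c where "c \<in> Va" "c \<in> Vb" by auto
        then have "(a,c) \<in> (und_adj F')\<^sup>*" "(b,c) \<in> (und_adj F')\<^sup>*" unfolding Va_def Vb_def by auto
        then have "(a,b) \<in> (und_adj F')\<^sup>*" using rtrancl_trans[of a c "und_adj F'" b] und_adj_rtrancl_sym[of b c F'] by blast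
        then show False using False bV unfolding Va_def by auto
      qed
      define Fa where "Fa = F' \<inter> (Va \<times> Va)"
      define Fb where "Fb = F' \<inter> (Vb \<times> Vb)"
      have FU: "F' = Fa \<union> Fb"
      proof -
        have "(x,y) \<in> Fa \<union> Fb" if "(x,y) \<in> F'" for x y
        proof -
          have xy: "x \<in> V" "y \<in> V" using that F'V by auto
          have e: "(x,y) \<in> und_adj F'" using that by (auto simp: und_adj_def)
          have "x \<in> Va \<Longrightarrow> y \<in> Va" using e xy unfolding Va_def by (auto intro: rtrancl_into_rtrancl)
          moreover have "x \<in> Vb \<Longrightarrow> y \<in> Vb" using e xy unfolding Vb_def by (auto intro: rtrancl_into_rtrancl)
          ultimately show ?thesis using that xy VU unfolding Fa_def Fb_def by auto
        qed
        then show ?thesis unfolding Fa_def Fb_def by auto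
      qed
      have FaFb: "Fa \<inter> Fb = {}" using disj unfolding Fa_def Fb_def by auto
      have finF': "finite F'" using finF unfolding F'_def by simp
      have cFU: "card F' = card Fa + card Fb"
        using FU FaFb finF' by (metis card_Un_disjoint finite_Un)
      have connC: "\<forall>x\<in>C. \<forall>y\<in>C. (x,y) \<in> (und_adj (F' \<inter> (C \<times> C)))\<^sup>*"
        if C: "C = {x\<in>V. (c,x) \<in> (und_adj F')\<^sup>*}" "c \<in> V" for C c
      proof -
        have Ceq: "C = {y. (c,y) \<in> (und_adj F')\<^sup>*}"
        proof -
          have "y \<in> V" if "(c,y) \<in> (und_adj F')\<^sup>*" for y
            using that C(2) F'V
            by (induction rule: rtrancl_induct) (auto simp: und_adj_def)
          then show ?thesis using C(1) by auto
        qed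
        have r: "(c,x) \<in> (und_adj (F' \<inter> (C \<times> C)))\<^sup>*" if "x \<in> C" for x
          using reach_restrict[of c x "und_adj F'"] that Ceq und_adj_inter[of F' C] by auto
        show ?thesis
        proof (intro ballI)
          fix x y assume "x \<in> C" "y \<in> C"
          then show "(x,y) \<in> (und_adj (F' \<inter> (C \<times> C)))\<^sup>*"
            using rtrancl_trans[OF und_adj_rtrancl_sym[OF r] r] by blast
        qed
      qed
      have finVa: "finite Va" and finVb: "finite Vb" using finV VU by auto
      have ca: "card Va \<le> card Fa + 1"
      proof (rule less.hyps[OF _ finVa])
        show "card Fa < card F" using cardF' FU finF' by (metis card_mono finite_Un le_less_trans sup_ge1)
        show "Fa \<subseteq> Va \<times> Va" unfolding Fa_def by auto
        show "\<forall>x\<in>Va. \<forall>y\<in>Va. (x, y) \<in> (und_adj Fa)\<^sup>*" using connC[OF Va_def aV] unfolding Fa_def .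
      qed
      have cb: "card Vb \<le> card Fb + 1"
      proof (rule less.hyps[OF _ finVb])
        show "card Fb < card F" using cardF' FU finF' by (metis card_mono finite_Un le_less_trans sup_ge2)
        show "Fb \<subseteq> Vb \<times> Vb" unfolding Fb_def by auto
        show "\<forall>x\<in>Vb. \<forall>y\<in>Vb. (x, y) \<in> (und_adj Fb)\<^sup>*" using connC[OF Vb_def bV] unfolding Fb_def .
      qed
      have "card V = card Va + card Vb" using VU disj finVa finVb by (simp add: card_Un_disjoint)
      then show ?thesis using ca cb cFU cardF'' by linarith
    qed
  qed
qed

definition sideS :: "'a set \<Rightarrow> ('a \<times> 'a) set \<Rightarrow> 'a \<Rightarrow> 'a \<Rightarrow> 'a set" where
  "sideS V E s t = {x\<in>V. (s,x) \<in> (und_adj (E - {(s,t)}))\<^sup>*}"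

lemma bridge:
  assumes tree: "oriented_tree V E" and e: "(s,t) \<in> E"
  shows "s \<in> sideS V E s t" "t \<notin> sideS V E s t" "sideS V E s t \<subseteq> V"
    "\<And>x y. (x,y) \<in> und_adj E \<Longrightarrow> x \<in> sideS V E s t \<Longrightarrow> y \<in> V \<Longrightarrow> y \<notin> sideS V E s t \<Longrightarrow> x = s \<and> y = t"
proof -
  have finV: "finite V" and EV: "E \<subseteq> V \<times> V" and conn: "\<forall>x\<in>V. \<forall>y\<in>V. (x,y) \<in> (und_adj E)\<^sup>*"
    and cE: "card E = card V - 1" and irr: "\<And>a b. (a,b) \<in> E \<Longrightarrow> a \<noteq> b \<and> (b,a) \<notin> E"
    using tree unfolding oriented_tree_def by auto
  have sV: "s \<in> V" and tV: "t \<in> V" using e EV by auto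
  show "s \<in> sideS V E s t" using sV by (simp add: sideS_def)
  show "sideS V E s t \<subseteq> V" by (auto simp: sideS_def)
  show tS: "t \<notin> sideS V E s t"
  proof
    assume "t \<in> sideS V E s t"
    then have st: "(s,t) \<in> (und_adj (E - {(s,t)}))\<^sup>*" by (simp add: sideS_def)
    have all: "(s,x) \<in> (und_adj (E - {(s,t)}))\<^sup>*" if "x \<in> V" for x
    proof -
      have "(s,x) \<in> (und_adj (E - {(s,t)}))\<^sup>* \<or> (t,x) \<in> (und_adj (E - {(s,t)}))\<^sup>*"
        using reach_split[of s x E t] conn sV that by blast
      then show ?thesis using rtrancl_trans[OF st] by blast
    qed
    have "\<forall>x\<in>V. \<forall>y\<in>V. (x,y) \<in> (und_adj (E - {(s,t)}))\<^sup>*"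
    proof (intro ballI)
      fix x y assume "x \<in> V" "y \<in> V"
      then show "(x,y) \<in> (und_adj (E - {(s,t)}))\<^sup>*"
        using rtrancl_trans[OF und_adj_rtrancl_sym[OF all] all] by blast
    qed
    from edge_count[OF finV _ this] EV have "card V \<le> card (E - {(s,t)}) + 1" by auto
    moreover have "card (E - {(s,t)}) = card E - 1" using e by simp
    moreover have "card V \<ge> 2"
    proof -
      have "s \<noteq> t" using irr e by auto
      then have "card {s,t} = 2" by simp
      moreover have "card {s,t} \<le> card V" using sV tV finV by (intro card_mono) auto
      ultimately show ?thesis by simp
    qed
    ultimately show False using cE by simp
  qed
  fix x y assume xy: "(x,y) \<in> und_adj E" and xS: "x \<in> sideS V E s t" and yV: "y \<in> V"
    and yS: "y \<notin> sideS V E s t"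
  show "x = s \<and> y = t"
  proof (cases "(x,y) \<in> und_adj (E - {(s,t)})")
    case True
    then have "y \<in> sideS V E s t" using xS yV unfolding sideS_def by (auto intro: rtrancl_into_rtrancl)
    then show ?thesis using yS by simp
  next
    case False
    then have "(x,y) = (s,t) \<or> (x,y) = (t,s)" using xy by (auto simp: und_adj_def)
    then show ?thesis using xS tS by auto
  qed
qed

lemma act_length[simp]: "length (edge_act f w) = length w"
  by (induction f w rule: edge_act.induct) auto

lemma act_set: "set (edge_act (p,q) w) \<subseteq> set w \<union> {p,q}"
  by (induction w) auto

lemma act_set_other: "x \<noteq> p \<Longrightarrow> x \<noteq> q \<Longrightarrow> (x \<in> set (edge_act (p,q) w)) = (x \<in> set w)"
  by (induction w) auto

lemma act_append: "edge_act (p,q) (w @ z) =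
   edge_act (p,q) w @ (if w = replicate (length w) p then edge_act (p,q) z else z)"
  by (induction w) auto

lemma act_rep: "edge_act (p,q) (replicate m p) = replicate m q"
  by (induction m) auto

lemma act_single: "edge_act (p,q) [x] = [if x = p then q else if x = q then p else x]"
  by auto

fun bin :: "'a \<Rightarrow> 'a \<Rightarrow> nat \<Rightarrow> nat \<Rightarrow> 'a list" where
  "bin p q 0 j = []"
| "bin p q (Suc m) j = (if odd j then p else q) # bin p q m (j div 2)"

fun bval :: "'a \<Rightarrow> 'a list \<Rightarrow> nat" where
  "bval p [] = 0"
| "bval p (x # w) = (if x = p then 1 else 0) + 2 * bval p w"

lemma bin_step: "p \<noteq> q \<Longrightarrow> j + 1 < 2 ^ m \<Longrightarrow>
    edge_act (p,q) (bin p q m j @ z) = bin p q m (j + 1) @ z"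
proof (induction m arbitrary: j)
  case 0 then show ?case by simp
next
  case (Suc m)
  show ?case
  proof (cases "odd j")
    case True
    then obtain k where k: "j = 2 * k + 1" by (meson oddE)
    have "k + 1 < 2 ^ m" using Suc.prems(2) k by simp
    then have "edge_act (p,q) (bin p q m k @ z) = bin p q m (k + 1) @ z" using Suc by blast
    then show ?thesis using k Suc.prems(1) by simp
  next
    case False
    then obtain k where k: "j = 2 * k" by (meson evenE)
    then show ?thesis using Suc.prems(1) by simp
  qed
qed

lemma bin_0: "bin p q m 0 = replicate m q"
  by (induction m) auto

lemma bin_iter: "p \<noteq> q \<Longrightarrow> j < 2 ^ m \<Longrightarrow>
   (edge_act (p,q) ^^ j) (replicate m q @ z) = bin p q m j @ z"
proof (induction j)
  case 0 then show ?case by (simp add: bin_0)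
next
  case (Suc j)
  then show ?case using bin_step[of p q j m z] by simp
qed

lemma bin_max: "bin p q m (2 ^ m - 1) = replicate m p"
proof (induction m)
  case 0 then show ?case by simp
next
  case (Suc m)
  have o: "odd (2 ^ Suc m - 1 :: nat)" by simp
  have d: "(2 ^ Suc m - 1) div 2 = (2 ^ m - 1 :: nat)" by (simp add: div_mult_self1)
  show ?case using Suc o d by (simp del: power_Suc)
qed

lemma bin_bval: "set w \<subseteq> {p,q} \<Longrightarrow> bin p q (length w) (bval p w) = w"
  by (induction w) auto

lemma bval_lt: "bval p w < 2 ^ length w"
  by (induction w) auto

lemma bval_rep_p: "bval p (replicate m p) = 2 ^ m - 1"
proof (induction m)
  case 0 then show ?case by simp
next
  case (Suc m)
  obtain k where k: "(2::nat) ^ m = Suc k" using not0_implies_Suc[of "(2::nat)^m"] by auto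
  then show ?case using Suc by simp
qed

lemma bval_rep_other: "x \<noteq> p \<Longrightarrow> bval p (replicate m x) = 0"
  by (induction m) auto

lemma bval_append: "bval p (xs @ ys) = bval p xs + 2 ^ length xs * bval p ys"
  by (induction xs) auto

lemma bval_act: "p \<noteq> q \<Longrightarrow> set w \<subseteq> {p,q} \<Longrightarrow>
   bval p (edge_act (p,q) w) = (bval p w + 1) mod 2 ^ length w"
proof (induction w)
  case Nil then show ?case by simp
next
  case (Cons x w)
  show ?case
  proof (cases "x = p")
    case True
    then have "bval p (edge_act (p,q) (x # w)) = 2 * ((bval p w + 1) mod 2 ^ length w)"
      using Cons by simp
    also have "\<dots> = (2 * (bval p w + 1)) mod (2 * 2 ^ length w)" by (simp add: mult_mod_right)
    finally show ?thesis using True by (simp add: algebra_simps)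
  next
    case False
    then have xq: "x = q" using Cons.prems by auto
    have "bval p w < 2 ^ length w" by (rule bval_lt)
    then have "1 + 2 * bval p w < 2 ^ length (x # w)" by simp
    then show ?thesis using xq Cons.prems(1) by simp
  qed
qed

definition words_adj where "words_adj = schreier_adj"

lemma adj_step:
  assumes "(p,q) \<in> E" "E \<subseteq> V \<times> V" "w \<in> words V n"
  shows "(w, edge_act (p,q) w) \<in> schreier_adj V E n" "edge_act (p,q) w \<in> words V n"
proof -
  show "edge_act (p,q) w \<in> words V n" using assms act_set[of p q w] by (auto simp: words_def)
  then show "(w, edge_act (p,q) w) \<in> schreier_adj V E n" using assms unfolding schreier_adj_def by blast
qed

lemma iter_path:
  assumes "(p,q) \<in> E" "E \<subseteq> V \<times> V" "w \<in> words V n"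
  shows "(w, (edge_act (p,q) ^^ j) w) \<in> schreier_adj V E n ^^ j \<and> (edge_act (p,q) ^^ j) w \<in> words V n"
proof (induction j)
  case 0 then show ?case using assms by simp
next
  case (Suc j)
  then show ?case using adj_step[OF assms(1,2), of "(edge_act (p,q) ^^ j) w" n] by auto
qed

lemma schreier_sym: "(x,y) \<in> schreier_adj V E n \<Longrightarrow> (y,x) \<in> schreier_adj V E n"
  by (auto simp: schreier_adj_def)

lemma schreier_rtrancl_sym: "(x,y) \<in> (schreier_adj V E n)\<^sup>* \<Longrightarrow> (y,x) \<in> (schreier_adj V E n)\<^sup>*"
proof -
  have "sym (schreier_adj V E n)" using schreier_sym by (auto simp: sym_def)
  then have "sym ((schreier_adj V E n)\<^sup>*)" by (rule sym_rtrancl)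
  then show "(x,y) \<in> (schreier_adj V E n)\<^sup>* \<Longrightarrow> (y,x) \<in> (schreier_adj V E n)\<^sup>*" by (auto simp: sym_def)
qed

lemma cycle_conn:
  assumes "(p,q) \<in> E" "E \<subseteq> V \<times> V" "p \<noteq> q" "set w \<subseteq> {p,q}" "length w = n"
  shows "(replicate n q, w) \<in> (schreier_adj V E n)\<^sup>*"
proof -
  have w0: "replicate n q \<in> words V n" using assms by (auto simp: words_def)
  have "(edge_act (p,q) ^^ bval p w) (replicate n q @ []) = bin p q n (bval p w) @ []"
    using bin_iter[OF assms(3), of "bval p w" n "[]"] bval_lt[of p w] assms(5) by simp
  then have "(edge_act (p,q) ^^ bval p w) (replicate n q) = w" using bin_bval[OF assms(4)] assms(5) by simp
  then show ?thesis using iter_path[OF assms(1,2) w0, of "bval p w"] by (metis relpow_imp_rtrancl)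
qed

lemma conn_all:
  assumes tree: "oriented_tree V E"
  shows "u \<in> words V n \<Longrightarrow> v \<in> words V n \<Longrightarrow> (u,v) \<in> (schreier_adj V E n)\<^sup>*"
proof (induction n arbitrary: u v)
  case 0 then show ?case by (simp add: words_def)
next
  case (Suc n)
  have EV: "E \<subseteq> V \<times> V" and connG: "\<forall>x\<in>V. \<forall>y\<in>V. (x,y) \<in> (und_adj E)\<^sup>*"
    and irr: "\<And>a b. (a,b) \<in> E \<Longrightarrow> a \<noteq> b"
    using tree unfolding oriented_tree_def by auto
  let ?R = "schreier_adj V E (Suc n)"
  have one: "(w1 @ [x], w2 @ [x]) \<in> ?R\<^sup>*"
    if "(w1,w2) \<in> schreier_adj V E n" "x \<in> V" for w1 w2 x
  proof -
    have dir: "(w1 @ [x], w2 @ [x]) \<in> ?R\<^sup>*"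
      if "(p,q) \<in> E" "edge_act (p,q) w1 = w2" "w1 \<in> words V n" for w1 w2 p q
    proof -
      define x' where "x' = (if w1 = replicate (length w1) p then (if x = p then q else if x = q then p else x) else x)"
      have w1x: "w1 @ [x] \<in> words V (Suc n)" using that(3) \<open>x \<in> V\<close> by (auto simp: words_def)
      have act: "edge_act (p,q) (w1 @ [x]) = w2 @ [x']"
        using that(2) by (simp add: act_append x'_def)
      have e1: "(w1 @ [x], w2 @ [x']) \<in> ?R\<^sup>*" using adj_step[OF that(1) EV w1x] act by auto
      show ?thesis
      proof (cases "x' = x")
        case True then show ?thesis using e1 by simp
      next
        case False
        then have w1p: "w1 = replicate (length w1) p" and xpq: "x = p \<or> x = q" and x'pq: "x' = p \<or> x' = q"
          unfolding x'_def by (auto split: if_splits)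
        have "length w1 = n" using that(3) by (simp add: words_def)
        then have w2q: "w2 = replicate n q" using that(2) w1p act_rep[of p q n] by simp
        have pq: "p \<noteq> q" using irr that(1) by auto
        have "(replicate (Suc n) q, w2 @ [x']) \<in> ?R\<^sup>*"
          using cycle_conn[OF that(1) EV pq, of "w2 @ [x']" "Suc n"] w2q x'pq by (auto simp: set_replicate_conv_if)
        moreover have "(replicate (Suc n) q, w2 @ [x]) \<in> ?R\<^sup>*"
          using cycle_conn[OF that(1) EV pq, of "w2 @ [x]" "Suc n"] w2q xpq by (auto simp: set_replicate_conv_if)
        ultimately have "(w2 @ [x'], w2 @ [x]) \<in> ?R\<^sup>*"
          by (rule rtrancl_trans[OF schreier_rtrancl_sym])
        then show ?thesis by (rule rtrancl_trans[OF e1])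
      qed
    qed
    from that(1) obtain p q where pq: "(p,q) \<in> E" "edge_act (p,q) w1 = w2 \<or> edge_act (p,q) w2 = w1"
      and ws: "w1 \<in> words V n" "w2 \<in> words V n"
      unfolding schreier_adj_def by auto
    from pq(2) show ?thesis
    proof
      assume "edge_act (p,q) w1 = w2" then show ?thesis using dir[OF pq(1) _ ws(1)] by blast
    next
      assume "edge_act (p,q) w2 = w1" then show ?thesis using dir[OF pq(1) _ ws(2)] schreier_rtrancl_sym by blast
    qed
  qed
  have same: "(w1 @ [x], w2 @ [x]) \<in> ?R\<^sup>*" if "w1 \<in> words V n" "w2 \<in> words V n" "x \<in> V" for w1 w2 x
  proof -
    have "(w1,w2) \<in> (schreier_adj V E n)\<^sup>*" using Suc.IH that by blast
    then show ?thesis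
    proof (induction rule: rtrancl_induct)
      case base then show ?case by simp
    next
      case (step y z)
      then show ?case using rtrancl_trans[OF _ one[OF step(2) that(3)]] by blast
    qed
  qed
  have edge: "(w1 @ [p], w2 @ [q]) \<in> ?R\<^sup>*"
    if "(p,q) \<in> E" "w1 \<in> words V n" "w2 \<in> words V n" for w1 w2 p q
  proof -
    have pq: "p \<noteq> q" using irr that(1) by auto
    have pV: "p \<in> V" "q \<in> V" using that(1) EV by auto
    have r: "replicate n p \<in> words V n" using pV by (auto simp: words_def)
    have a: "(replicate (Suc n) q, replicate n p @ [p]) \<in> ?R\<^sup>*"
      using cycle_conn[OF that(1) EV pq, of "replicate n p @ [p]" "Suc n"] by (auto simp: set_replicate_conv_if)
    have b: "(replicate (Suc n) q, replicate n p @ [q]) \<in> ?R\<^sup>*"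
      using cycle_conn[OF that(1) EV pq, of "replicate n p @ [q]" "Suc n"] by (auto simp: set_replicate_conv_if)
    have "(w1 @ [p], replicate n p @ [p]) \<in> ?R\<^sup>*" using same[OF that(2) r pV(1)] .
    moreover have "(replicate n p @ [q], w2 @ [q]) \<in> ?R\<^sup>*" using same[OF r that(3) pV(2)] .
    moreover have "(replicate n p @ [p], replicate n p @ [q]) \<in> ?R\<^sup>*"
      by (rule rtrancl_trans[OF schreier_rtrancl_sym[OF a] b])
    ultimately show ?thesis by (meson rtrancl_trans[of "w1 @ [p]" _ ?R])
  qed
  have letters: "(w1 @ [x], w2 @ [y]) \<in> ?R\<^sup>*"
    if xy: "(x,y) \<in> (und_adj E)\<^sup>*" and w1: "w1 \<in> words V n" and w2: "w2 \<in> words V n" and xV: "x \<in> V" for w1 w2 x y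
    using xy w2
  proof (induction arbitrary: w2 rule: rtrancl_induct)
    case base then show ?case using same[OF w1 base xV] by simp
  next
    case (step y z)
    obtain r where r: "r \<in> words V n" using w1 by blast
    have "(w1 @ [x], r @ [y]) \<in> ?R\<^sup>*" using step.IH[OF r] .
    moreover have "(r @ [y], w2 @ [z]) \<in> ?R\<^sup>*"
    proof -
      from step(2) have "(y,z) \<in> E \<or> (z,y) \<in> E" unfolding und_adj_def by auto
      then show ?thesis
      proof
        assume "(y,z) \<in> E" then show ?thesis using edge[OF _ r step.prems] by blast
      next
        assume "(z,y) \<in> E" then show ?thesis using edge[OF _ step.prems r] schreier_rtrancl_sym by blast
      qed
    qed
    ultimately show ?case by (rule rtrancl_trans)
  qed
  have dec: "w = butlast w @ [last w] \<and> butlast w \<in> words V n \<and> last w \<in> V" if "w \<in> words V (Suc n)" for w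
  proof -
    have "w \<noteq> []" using that by (auto simp: words_def)
    then show ?thesis using that by (auto simp: words_def dest: in_set_butlastD)
  qed
  have "(butlast u @ [last u], butlast v @ [last v]) \<in> ?R\<^sup>*"
    using dec[OF Suc.prems(1)] dec[OF Suc.prems(2)] letters connG by blast
  then show ?case using dec[OF Suc.prems(1)] dec[OF Suc.prems(2)] by simp
qed

definition proj :: "'a set \<Rightarrow> 'a \<Rightarrow> 'a \<Rightarrow> 'a \<Rightarrow> 'a" where
  "proj S s t x = (if x = s \<or> x = t then x else if x \<in> S then s else t)"

fun rr :: "'a set \<Rightarrow> 'a \<Rightarrow> 'a \<Rightarrow> 'a list \<Rightarrow> 'a list" where
  "rr S s t [] = []"
| "rr S s t (x # w) = (if set w \<subseteq> {s,t} then proj S s t x # w else hd (rr S s t w) # rr S s t w)"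

lemma rr_id: "set w \<subseteq> {s,t} \<Longrightarrow> rr S s t w = w"
  by (induction w) (auto simp: proj_def)

lemma rr_length[simp]: "length (rr S s t w) = length w"
  by (induction w) auto

lemma act_fix: "p \<noteq> q \<Longrightarrow> {p,q} \<noteq> {s,t} \<Longrightarrow> set w \<subseteq> {s,t} \<Longrightarrow>
   set (edge_act (p,q) w) \<subseteq> {s,t} \<Longrightarrow> edge_act (p,q) w = w"
  by (cases w) auto

lemma act_hd: "edge_act (p,q) w \<noteq> w \<Longrightarrow> w \<noteq> [] \<and> hd w \<in> {p,q} \<and> hd (edge_act (p,q) w) \<in> {p,q}"
  by (cases w) (auto split: if_splits)

lemma act_set_pq: "(set (edge_act (p,q) w) \<subseteq> {p,q}) = (set w \<subseteq> {p,q})"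
  by (induction w) auto

lemma rr_other:
  assumes pq: "p \<noteq> q" "{p,q} \<noteq> {s,t}" and pr: "proj S s t p = proj S s t q"
  shows "rr S s t (edge_act (p,q) w) = rr S s t w"
proof (induction w)
  case Nil then show ?case by simp
next
  case (Cons x w)
  let ?f = "edge_act (p,q)"
  show ?case
  proof (cases "x = p")
    case False
    show ?thesis
    proof (cases "x = q")
      case True
      have "?f (x # w) = p # w" using True pq(1) by simp
      then show ?thesis using True pr by simp
    next
      case False
      then have "?f (x # w) = x # w" using \<open>x \<noteq> p\<close> by simp
      then show ?thesis by simp
    qed
  next
    case True
    have eq: "?f (x # w) = q # ?f w" using True by simp
    have p1: "proj S s t y = y" if "y \<in> {s,t}" for y using that by (auto simp: proj_def)
    have cons: "(P1 \<and> P2) \<or> (\<not> P1 \<and> \<not> P2) \<or> (P1 \<and> \<not> P2) \<or> (\<not> P1 \<and> P2)" for P1 P2 by blast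
    consider "set w \<subseteq> {s,t}" "set (?f w) \<subseteq> {s,t}" | "\<not> set w \<subseteq> {s,t}" "\<not> set (?f w) \<subseteq> {s,t}"
      | "set w \<subseteq> {s,t}" "\<not> set (?f w) \<subseteq> {s,t}" | "\<not> set w \<subseteq> {s,t}" "set (?f w) \<subseteq> {s,t}"
      using cons[of "set w \<subseteq> {s,t}" "set (?f w) \<subseteq> {s,t}"] by argo
    then show ?thesis
    proof cases
      case 1
      then have "?f w = w" by (rule act_fix[OF pq])
      then show ?thesis using eq True 1 pr by simp
    next
      case 2
      then show ?thesis using eq True Cons.IH by simp
    next
      case 3
      have ne: "?f w \<noteq> w" proof assume "?f w = w" then show False using 3 by simp qed
      from act_hd[OF ne] have h: "w \<noteq> []" "hd w \<in> {p,q}" by auto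
      have hw: "hd w \<in> {s,t}" using 3(1) h(1) hd_in_set by blast
      have "proj S s t p = hd w"
      proof (cases "hd w = p")
        case True then show ?thesis using p1[OF hw] by simp
      next
        case False then have "hd w = q" using h(2) by simp
        then show ?thesis using p1[OF hw] pr by simp
      qed
      moreover have "rr S s t w = w" by (rule rr_id[OF 3(1)])
      ultimately show ?thesis using eq True Cons.IH 3 by simp
    next
      case 4
      have ne: "?f w \<noteq> w" proof assume "?f w = w" then show False using 4 by simp qed
      from act_hd[OF ne] have h: "w \<noteq> []" "hd (?f w) \<in> {p,q}" by auto
      have fne: "?f w \<noteq> []" using h(1) by (cases w) auto
      have hw: "hd (?f w) \<in> {s,t}" using 4(2) fne hd_in_set by blast
      have "proj S s t q = hd (?f w)"
      proof (cases "hd (?f w) = q")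
        case True then show ?thesis using p1[OF hw] by simp
      next
        case False then have "hd (?f w) = p" using h(2) by simp
        then show ?thesis using p1[OF hw] pr by simp
      qed
      moreover have "rr S s t (?f w) = ?f w" by (rule rr_id[OF 4(2)])
      ultimately show ?thesis using eq True Cons.IH 4 by simp
    qed
  qed
qed

lemma rr_e:
  assumes "s \<noteq> t" "\<not> set w \<subseteq> {s,t}"
  shows "rr S s t (edge_act (s,t) w) = rr S s t w"
  using assms(2)
proof (induction w)
  case Nil then show ?case by simp
next
  case (Cons x w)
  show ?case
  proof (cases "x = s")
    case True
    then have nw: "\<not> set w \<subseteq> {s,t}" using Cons.prems by auto
    then have "\<not> set (edge_act (s,t) w) \<subseteq> {s,t}" by (simp add: act_set_pq)
    then show ?thesis using True nw Cons.IH by simp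
  next
    case False
    then show ?thesis using Cons.prems by (cases "x = t") auto
  qed
qed

definition pot :: "'a set \<Rightarrow> 'a \<Rightarrow> 'a \<Rightarrow> 'a list \<Rightarrow> nat" where
  "pot S s t w = (let v = bval s (rr S s t w) in min v (2 ^ length w - v))"

lemma bval_rr_lt: "bval s (rr S s t w) < 2 ^ length w"
  using bval_lt[of s "rr S s t w"] by simp

lemma pot_lip:
  assumes st: "s \<noteq> t"
    and H: "\<And>p q. (p,q) \<in> E \<Longrightarrow> (p,q) \<noteq> (s,t) \<Longrightarrow> p \<noteq> q \<and> {p,q} \<noteq> {s,t} \<and> proj S s t p = proj S s t q"
    and e: "(p,q) \<in> E"
  shows "\<bar>int (pot S s t (edge_act (p,q) w)) - int (pot S s t w)\<bar> \<le> 1"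
proof (cases "(p,q) = (s,t)")
  case False
  then have "rr S s t (edge_act (p,q) w) = rr S s t w"
  proof -
    from H[OF e False] have "p \<noteq> q" "{p,q} \<noteq> {s,t}" "proj S s t p = proj S s t q" by auto
    then show ?thesis by (rule rr_other)
  qed
  then show ?thesis by (simp add: pot_def)
next
  case True
  then have pq: "p = s" "q = t" by auto
  show ?thesis
  proof (cases "set w \<subseteq> {s,t}")
    case False
    then show ?thesis using rr_e[OF st False] pq by (simp add: pot_def)
  next
    case True
    have r1: "rr S s t w = w" by (rule rr_id[OF True])
    have r2: "rr S s t (edge_act (s,t) w) = edge_act (s,t) w" by (rule rr_id) (simp only: act_set_pq True)
    define N where "N = (2::nat) ^ length w"
    define v where "v = bval s w"
    have vN: "v < N" unfolding v_def N_def by (rule bval_lt)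
    have bv: "bval s (edge_act (s,t) w) = (v + 1) mod N" unfolding v_def N_def using bval_act[OF st True] .
    have p1: "pot S s t w = min v (N - v)" using r1 by (simp add: pot_def v_def N_def Let_def)
    have p2: "pot S s t (edge_act (s,t) w) = min ((v + 1) mod N) (N - (v + 1) mod N)"
      using r2 bv by (simp add: pot_def N_def Let_def)
    show ?thesis
    proof (cases "v + 1 < N")
      case True
      then have "(v + 1) mod N = v + 1" by simp
      then show ?thesis using p1 p2 pq True by (simp add: min_def; linarith)
    next
      case False
      then have "v + 1 = N" using vN by simp
      then have "(v + 1) mod N = 0" by simp
      then show ?thesis using p1 p2 pq \<open>v + 1 = N\<close> by (simp add: min_def; linarith)
    qed
  qed
qed

lemma pot_path:
  assumes st: "s \<noteq> t"
    and H: "\<And>p q. (p,q) \<in> E \<Longrightarrow> (p,q) \<noteq> (s,t) \<Longrightarrow> p \<noteq> q \<and> {p,q} \<noteq> {s,t} \<and> proj S s t p = proj S s t q"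
  shows "(x,y) \<in> schreier_adj V E n ^^ m \<Longrightarrow> \<bar>int (pot S s t x) - int (pot S s t y)\<bar> \<le> int m"
proof (induction m arbitrary: y)
  case 0 then show ?case by simp
next
  case (Suc m)
  then obtain z where z: "(x,z) \<in> schreier_adj V E n ^^ m" "(z,y) \<in> schreier_adj V E n" by auto
  from z(2) obtain p q where pq: "(p,q) \<in> E" "edge_act (p,q) z = y \<or> edge_act (p,q) y = z"
    unfolding schreier_adj_def by auto
  have "\<bar>int (pot S s t z) - int (pot S s t y)\<bar> \<le> 1"
    using pq(2) pot_lip[OF st H pq(1), of z] pot_lip[OF st H pq(1), of y] by auto
  then show ?case using Suc.IH[OF z(1)] by simp
qed

lemma pot_gdist:
  assumes st: "s \<noteq> t"
    and H: "\<And>p q. (p,q) \<in> E \<Longrightarrow> (p,q) \<noteq> (s,t) \<Longrightarrow> p \<noteq> q \<and> {p,q} \<noteq> {s,t} \<and> proj S s t p = proj S s t q"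
    and d: "int d \<le> \<bar>int (pot S s t x) - int (pot S s t y)\<bar>"
  shows "enat d \<le> gdist (schreier_adj V E n) x y"
proof (rule gdist_ge)
  fix m assume "(x,y) \<in> schreier_adj V E n ^^ m"
  from pot_path[OF st H this] d show "d \<le> m" by simp
qed

lemma words_card: "finite V \<Longrightarrow> card (words V m) = card V ^ m"
proof -
  assume "finite V"
  have "words V m = {xs. set xs \<subseteq> V \<and> length xs = m}" by (auto simp: words_def)
  then show ?thesis using card_lists_length_eq[OF \<open>finite V\<close>, of m] by simp
qed

lemma words_finite: "finite V \<Longrightarrow> finite (words V m)"
proof -
  assume "finite V"
  have "words V m = {xs. set xs \<subseteq> V \<and> length xs = m}" by (auto simp: words_def)
  then show ?thesis using finite_lists_length_eq[OF \<open>finite V\<close>, of m] by simp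
qed

lemma words_dec: "z \<in> words V (Suc m) \<Longrightarrow> z = butlast z @ [last z] \<and> butlast z \<in> words V m \<and> last z \<in> V"
proof -
  assume z: "z \<in> words V (Suc m)"
  then have "z \<noteq> []" by (auto simp: words_def)
  then show ?thesis using z by (auto simp: words_def dest: in_set_butlastD)
qed

lemma last_change:
  assumes z: "z \<in> words V (Suc m)" and ch: "last (edge_act (p,q) z) \<noteq> last z"
  shows "z = replicate m p @ [last z] \<and> (last z = p \<or> last z = q)
     \<and> edge_act (p,q) z = replicate m q @ [if last z = p then q else p]"
proof -
  define bz where "bz = butlast z"
  define lz where "lz = last z"
  have zd: "z = bz @ [lz]" and bl: "length bz = m" using words_dec[OF z] unfolding bz_def lz_def
    by (auto simp: words_def)
  have act: "edge_act (p,q) z = edge_act (p,q) bz @ (if bz = replicate (length bz) p then edge_act (p,q) [lz] else [lz])"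
    using zd act_append[of p q bz "[lz]"] by simp
  have brep: "bz = replicate m p"
  proof (rule ccontr)
    assume "bz \<noteq> replicate m p"
    then have "edge_act (p,q) z = edge_act (p,q) bz @ [lz]" using act bl by simp
    then show False using ch unfolding lz_def by simp
  qed
  have act2: "edge_act (p,q) z = replicate m q @ [if lz = p then q else if lz = q then p else lz]"
    using act brep bl act_rep[of p q m] by simp
  have "lz = p \<or> lz = q"
  proof (rule ccontr)
    assume "\<not> (lz = p \<or> lz = q)"
    then have "edge_act (p,q) z = replicate m q @ [lz]" using act2 by simp
    then show False using ch unfolding lz_def by simp
  qed
  then show ?thesis using zd brep act2 unfolding lz_def by auto
qed

lemma relpow_sym:
  assumes "\<And>x y. (x,y) \<in> R \<Longrightarrow> (y,x) \<in> R"
  shows "(x,y) \<in> R ^^ j \<Longrightarrow> (y,x) \<in> R ^^ j"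
proof (induction j arbitrary: y)
  case 0 then show ?case by simp
next
  case (Suc j)
  then obtain z where z: "(x,z) \<in> R ^^ j" "(z,y) \<in> R" by auto
  have "(z,x) \<in> R ^^ j" using Suc.IH[OF z(1)] .
  then show ?case using relpow_Suc_I2[OF assms[OF z(2)]] by blast
qed

lemma gdist_self: "gdist R x x = 0"
proof -
  have "gdist R x x \<le> 0" using gdist_le[of x x 0 R] by (simp add: zero_enat_def)
  then show ?thesis by simp
qed

lemma final_arith:
  fixes c K x :: int
  shows "c * x * ((K - c) * x) = c * (K - c) * (x * x)
       \<and> c * (K - c) * (x * x) = c * x * (K * x - c * x)
       \<and> c * x * (K * x - c * x) = (K - c) * x * (K * x - (K - c) * x)"
  by (simp add: algebra_simps)

theorem lemma5p5:
  fixes V :: "'a set" and E :: "('a \<times> 'a) set" and k n :: nat and s t :: 'a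
    and u v :: "'a list"
  assumes tree: "oriented_tree V E"
    and k: "card V = k"
    and n: "n \<ge> 1"
    and e: "(s, t) \<in> E"
    and uv: "{u, v} = {replicate n s, replicate n t}
           \<or> {u, v} = {replicate (n - 1) s @ [t], replicate (n - 1) t @ [s]}"
  shows "int (nGamma V E n u v) * int (nGamma V E n v u)
           = int (nG V E s t) * int (nG V E t s) * int k ^ (2 * (n - 1))
       \<and> int (nG V E s t) * int (nG V E t s) * int k ^ (2 * (n - 1))
           = int (nG V E s t) * int k ^ (n - 1) * (int k ^ n - int (nG V E s t) * int k ^ (n - 1))
       \<and> int (nG V E s t) * int k ^ (n - 1) * (int k ^ n - int (nG V E s t) * int k ^ (n - 1))
           = int (nG V E t s) * int k ^ (n - 1) * (int k ^ n - int (nG V E t s) * int k ^ (n - 1))"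
proof -
  have finV: "finite V" and EV: "E \<subseteq> V \<times> V" and connG: "\<forall>x\<in>V. \<forall>y\<in>V. (x,y) \<in> (und_adj E)\<^sup>*"
    and irr: "\<And>a b. (a,b) \<in> E \<Longrightarrow> a \<noteq> b \<and> (b,a) \<notin> E"
    using tree unfolding oriented_tree_def by auto
  obtain m where nm: "n = Suc m" using n by (cases n) auto
  have sV: "s \<in> V" and tV: "t \<in> V" using e EV by auto
  have st: "s \<noteq> t" using irr[OF e] by simp
  have ts: "(t,s) \<notin> E" using irr[OF e] by simp
  define S where "S = sideS V E s t"
  have sS: "s \<in> S" and tS: "t \<notin> S" and SV: "S \<subseteq> V"
    and crossG: "\<And>x y. (x,y) \<in> und_adj E \<Longrightarrow> x \<in> S \<Longrightarrow> y \<in> V \<Longrightarrow> y \<notin> S \<Longrightarrow> x = s \<and> y = t"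
    using bridge[OF tree e] unfolding S_def by blast+
  have side: "(p \<in> S) = (q \<in> S)" if pq: "(p,q) \<in> E" "(p,q) \<noteq> (s,t)" for p q
  proof -
    have pV: "p \<in> V" "q \<in> V" using pq EV by auto
    have a1: "(p,q) \<in> und_adj E" "(q,p) \<in> und_adj E" using pq by (auto simp: und_adj_def)
    show ?thesis
    proof (rule ccontr)
      assume "(p \<in> S) \<noteq> (q \<in> S)"
      then consider "p \<in> S" "q \<notin> S" | "q \<in> S" "p \<notin> S" by auto
      then show False
      proof cases
        case 1
        then have "p = s \<and> q = t" using crossG[OF a1(1)] pV by blast
        then show False using pq(2) by simp
      next
        case 2
        then have "q = s \<and> p = t" using crossG[OF a1(2)] pV by blast
        then show False using pq(1) ts by simp
      qed
    qed
  qed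
  have H: "p \<noteq> q \<and> {p,q} \<noteq> {s,t} \<and> proj S s t p = proj S s t q"
    if pq: "(p,q) \<in> E" "(p,q) \<noteq> (s,t)" for p q
  proof (intro conjI)
    show pq': "p \<noteq> q" using irr[OF pq(1)] by simp
    show "{p,q} \<noteq> {s,t}"
    proof
      assume "{p,q} = {s,t}"
      then have "(p = s \<and> q = t) \<or> (p = t \<and> q = s)" by (simp add: doubleton_eq_iff)
      then show False using pq ts by auto
    qed
    have sd: "(p \<in> S) = (q \<in> S)" by (rule side[OF pq])
    show "proj S s t p = proj S s t q"
      using sd sS tS pq' pq(2) pq(1) ts unfolding proj_def by auto
  qed
  let ?RG = "und_adj E"
  have RGV: "?RG \<subseteq> V \<times> V" using EV by (auto simp: und_adj_def)
  have Gsets: "{w \<in> V. gdist ?RG w s < gdist ?RG w t} = S"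
    "{w \<in> V. gdist ?RG w t < gdist ?RG w s} = V - S"
  proof -
    have cr: "(x = s \<and> y = t) \<or> (x = s \<and> y = t)"
      if "(x,y) \<in> ?RG" "x \<in> S" "y \<notin> S" for x y
    proof -
      have "y \<in> V" using that(1) RGV by auto
      then show ?thesis using crossG[OF that(1) that(2)] that(3) by blast
    qed
    have d: "gdist ?RG s s \<le> gdist ?RG t t" "gdist ?RG t t \<le> gdist ?RG s s" by (simp_all add: gdist_self)
    show "{w \<in> V. gdist ?RG w s < gdist ?RG w t} = S"
      using closer_sets(1)[OF RGV und_adj_sym _ SV sS _ cr d] connG tV tS by blast
    show "{w \<in> V. gdist ?RG w t < gdist ?RG w s} = V - S"
      using closer_sets(2)[OF RGV und_adj_sym _ SV sS _ cr d] connG tV tS by blast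
  qed
  have nG1: "nG V E s t = card S" using Gsets(1) by (simp add: nG_def ncloser_def)
  have nG2: "nG V E t s = k - card S"
  proof -
    have "nG V E t s = card (V - S)" using Gsets(2) by (simp add: nG_def ncloser_def)
    also have "\<dots> = k - card S" using k SV finV by (simp add: card_Diff_subset finite_subset)
    finally show ?thesis .
  qed
  have cSk: "card S \<le> k" using card_mono[OF finV SV] k by simp
  let ?X = "words V n"
  let ?R = "schreier_adj V E n"
  define A where "A = {w \<in> ?X. last w \<in> S}"
  define a1 where "a1 = replicate m s @ [s]"
  define b1 where "b1 = replicate m t @ [t]"
  define a2 where "a2 = replicate m t @ [s]"
  define b2 where "b2 = replicate m s @ [t]"
  have RX: "?R \<subseteq> ?X \<times> ?X" by (auto simp: schreier_adj_def)
  have AX: "A \<subseteq> ?X" by (auto simp: A_def)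
  have inX: "a1 \<in> ?X" "b1 \<in> ?X" "a2 \<in> ?X" "b2 \<in> ?X"
    unfolding a1_def b1_def a2_def b2_def words_def using sV tV nm by (auto simp: set_replicate_conv_if)
  have a1A: "a1 \<in> A" and a2A: "a2 \<in> A" using inX sS by (auto simp: A_def a1_def a2_def)
  have b1A: "b1 \<in> ?X - A" and b2A: "b2 \<in> ?X - A" using inX tS by (auto simp: A_def b1_def b2_def)
  have connX: "\<And>x y. x \<in> ?X \<Longrightarrow> y \<in> ?X \<Longrightarrow> (x,y) \<in> ?R\<^sup>*" using conn_all[OF tree] by blast
  have symR: "\<And>x y. (x,y) \<in> ?R \<Longrightarrow> (y,x) \<in> ?R" by (rule schreier_sym)
  have cross: "(x = a1 \<and> y = b1) \<or> (x = a2 \<and> y = b2)"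
    if xy: "(x,y) \<in> ?R" and xA: "x \<in> A" and yA: "y \<notin> A" for x y
  proof -
    have xX: "x \<in> words V (Suc m)" and yX: "y \<in> words V (Suc m)" using xy RX nm by auto
    have lx: "last x \<in> S" using xA by (simp add: A_def)
    have ly: "last y \<notin> S" using yA yX nm by (simp add: A_def)
    from xy obtain p q where pq: "(p,q) \<in> E" "edge_act (p,q) x = y \<or> edge_act (p,q) y = x"
      unfolding schreier_adj_def by auto
    have pst: "(p,q) = (s,t)" if "c \<in> S" "d \<notin> S" "(c = p \<and> d = q) \<or> (c = q \<and> d = p)" for c d
    proof (rule ccontr)
      assume "(p,q) \<noteq> (s,t)"
      from side[OF pq(1) this] that show False by auto
    qed
    from pq(2) show ?thesis
    proof
      assume fx: "edge_act (p,q) x = y"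
      have "last (edge_act (p,q) x) \<noteq> last x" using fx lx ly by auto
      from last_change[OF xX this] have lc: "x = replicate m p @ [last x]" "last x = p \<or> last x = q"
        "edge_act (p,q) x = replicate m q @ [if last x = p then q else p]" by auto
      have ly': "last y = (if last x = p then q else p)" using lc(3) fx by auto
      have "(p,q) = (s,t)" using pst[OF lx ly] lc(2) ly' by auto
      then have P: "p = s" "q = t" by auto
      have "last x = s" using lc(2) P lx tS by auto
      then have "x = a1 \<and> y = b1" using lc(1,3) fx P st unfolding a1_def b1_def by auto
      then show ?thesis by simp
    next
      assume fy: "edge_act (p,q) y = x"
      have "last (edge_act (p,q) y) \<noteq> last y" using fy lx ly by auto
      from last_change[OF yX this] have lc: "y = replicate m p @ [last y]" "last y = p \<or> last y = q"
        "edge_act (p,q) y = replicate m q @ [if last y = p then q else p]" by auto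
      have lx': "last x = (if last y = p then q else p)" using lc(3) fy by auto
      have "(p,q) = (s,t)" using pst[OF lx ly] lc(2) lx' by auto
      then have P: "p = s" "q = t" by auto
      have "last y = t" using lc(2) P ly sS by auto
      then have "x = a2 \<and> y = b2" using lc(1,3) fy P st unfolding a2_def b2_def by auto
      then show ?thesis by simp
    qed
  qed
  define D where "D = (2::nat) ^ m - 1"
  have Dlt: "D < 2 ^ m" unfolding D_def by simp
  have up1: "(a2, a1) \<in> ?R ^^ D"
  proof -
    have "(edge_act (s,t) ^^ D) a2 = bin s t m D @ [s]" unfolding a2_def by (rule bin_iter[OF st Dlt])
    also have "\<dots> = a1" unfolding a1_def D_def using bin_max[of s t m] by simp
    finally show ?thesis using iter_path[OF e EV inX(3), of D] by simp
  qed
  have up2: "(b1, b2) \<in> ?R ^^ D"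
  proof -
    have "(edge_act (s,t) ^^ D) b1 = bin s t m D @ [t]" unfolding b1_def by (rule bin_iter[OF st Dlt])
    also have "\<dots> = b2" unfolding b2_def D_def using bin_max[of s t m] by simp
    finally show ?thesis using iter_path[OF e EV inX(2), of D] by simp
  qed
  have up1': "(a1, a2) \<in> ?R ^^ D" by (rule relpow_sym[OF symR up1])
  have up2': "(b2, b1) \<in> ?R ^^ D" by (rule relpow_sym[OF symR up2])
  have pm: "(1::nat) \<le> 2 ^ m" by simp
  obtain K where K: "(2::nat) ^ m = Suc K" using not0_implies_Suc[of "(2::nat)^m"] by auto
  have pa1: "pot S s t a1 = 1"
  proof -
    have "rr S s t a1 = a1" unfolding a1_def by (rule rr_id) (auto simp: set_replicate_conv_if)
    moreover have "bval s a1 = 2 ^ m - 1 + 2 ^ m" unfolding a1_def by (simp add: bval_append bval_rep_p)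
    ultimately show ?thesis unfolding pot_def Let_def by (simp add: a1_def K)
  qed
  have pa2: "pot S s t a2 = 2 ^ m"
  proof -
    have "rr S s t a2 = a2" unfolding a2_def by (rule rr_id) (auto simp: set_replicate_conv_if)
    moreover have "bval s a2 = 2 ^ m" unfolding a2_def using st by (simp add: bval_append bval_rep_other)
    ultimately show ?thesis unfolding pot_def Let_def by (simp add: a2_def)
  qed
  have pb1: "pot S s t b1 = 0"
  proof -
    have "rr S s t b1 = b1" unfolding b1_def by (rule rr_id) (auto simp: set_replicate_conv_if)
    moreover have "bval s b1 = 0" unfolding b1_def using st by (simp add: bval_append bval_rep_other)
    ultimately show ?thesis unfolding pot_def Let_def by simp
  qed
  have pb2: "pot S s t b2 = 2 ^ m - 1"
  proof -
    have "rr S s t b2 = b2" unfolding b2_def by (rule rr_id) (auto simp: set_replicate_conv_if)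
    moreover have "bval s b2 = 2 ^ m - 1" unfolding b2_def using st by (simp add: bval_append bval_rep_p)
    ultimately show ?thesis unfolding pot_def Let_def by (simp add: b2_def K)
  qed
  have lo: "enat D \<le> gdist ?R a1 a2" "enat D \<le> gdist ?R a2 a1"
     "enat D \<le> gdist ?R b1 b2" "enat D \<le> gdist ?R b2 b1"
    using pot_gdist[OF st H, where d=D and x=a1 and y=a2 and V=V and n=n] pot_gdist[OF st H, where d=D and x=a2 and y=a1 and V=V and n=n]
      pot_gdist[OF st H, where d=D and x=b1 and y=b2 and V=V and n=n] pot_gdist[OF st H, where d=D and x=b2 and y=b1 and V=V and n=n]
      pa1 pa2 pb1 pb2 pm unfolding D_def by auto
  have dd: "gdist ?R a1 a2 = enat D" "gdist ?R a2 a1 = enat D"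
     "gdist ?R b1 b2 = enat D" "gdist ?R b2 b1 = enat D"
    using lo gdist_le[OF up1] gdist_le[OF up2] gdist_le[OF up1'] gdist_le[OF up2'] by (auto intro: antisym)
  have sets1: "{w \<in> ?X. gdist ?R w a1 < gdist ?R w b1} = A" "{w \<in> ?X. gdist ?R w b1 < gdist ?R w a1} = ?X - A"
    using closer_sets[OF RX symR connX AX a1A b1A cross] dd by auto
  have cross2: "(x = a2 \<and> y = b2) \<or> (x = a1 \<and> y = b1)" if "(x,y) \<in> ?R" "x \<in> A" "y \<notin> A" for x y
    using cross[OF that] by blast
  have sets2: "{w \<in> ?X. gdist ?R w a2 < gdist ?R w b2} = A" "{w \<in> ?X. gdist ?R w b2 < gdist ?R w a2} = ?X - A"
    using closer_sets[OF RX symR connX AX a2A b2A cross2] dd by auto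
  have Aim: "A = (\<lambda>(w,x). w @ [x]) ` (words V m \<times> S)"
  proof
    show "A \<subseteq> (\<lambda>(w,x). w @ [x]) ` (words V m \<times> S)"
    proof
      fix w assume "w \<in> A"
      then have w: "w \<in> words V (Suc m)" "last w \<in> S" using nm by (auto simp: A_def)
      then show "w \<in> (\<lambda>(w,x). w @ [x]) ` (words V m \<times> S)" using words_dec[OF w(1)]
        by (intro image_eqI[of _ _ "(butlast w, last w)"]) auto
    qed
    show "(\<lambda>(w,x). w @ [x]) ` (words V m \<times> S) \<subseteq> A"
      using SV nm by (auto simp: A_def words_def)
  qed
  have injA: "inj_on (\<lambda>(w,x). w @ [x]) (words V m \<times> S)" by (auto simp: inj_on_def)
  have finS: "finite S" using SV finV by (rule finite_subset)
  have cA: "card A = k ^ m * card S"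
    using Aim card_image[OF injA] words_card[OF finV, of m] k by (simp add: card_cartesian_product)
  have cX: "card ?X = k * k ^ m" using words_card[OF finV, of n] k nm by simp
  have finX: "finite ?X" by (rule words_finite[OF finV])
  have cXA: "card (?X - A) = (k - card S) * k ^ m"
  proof -
    have "card (?X - A) = card ?X - card A" using AX finX by (simp add: card_Diff_subset finite_subset)
    also have "\<dots> = k * k ^ m - card S * k ^ m" using cX cA by (simp add: mult.commute)
    also have "\<dots> = (k - card S) * k ^ m" by (simp add: diff_mult_distrib)
    finally show ?thesis .
  qed
  have prod: "nGamma V E n u v * nGamma V E n v u = card A * card (?X - A)"
  proof -
    have rn: "replicate n s = a1" "replicate n t = b1" "replicate (n - 1) s @ [t] = b2" "replicate (n - 1) t @ [s] = a2"
      unfolding a1_def b1_def a2_def b2_def nm by (simp_all add: replicate_append_same)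
    have ng: "nGamma V E n x y = card {w \<in> ?X. gdist ?R w x < gdist ?R w y}" for x y
      by (simp add: nGamma_def ncloser_def)
    from uv have "(u = a1 \<and> v = b1) \<or> (u = b1 \<and> v = a1) \<or> (u = b2 \<and> v = a2) \<or> (u = a2 \<and> v = b2)"
      unfolding rn by (auto simp: doubleton_eq_iff)
    then show ?thesis using sets1 sets2 unfolding ng by auto
  qed
  have nm1: "n - 1 = m" using nm by simp
  have kn: "int k ^ n = int k * int k ^ m" using nm by simp
  have p2: "int k ^ (2 * m) = int k ^ m * int k ^ m" by (simp add: power_mult_distrib mult_2 power_add)
  have ci: "int (k - card S) = int k - int (card S)" using cSk by simp
  have main: "int (nGamma V E n u v) * int (nGamma V E n v u)
      = int (card S) * int k ^ m * ((int k - int (card S)) * int k ^ m)"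
  proof -
    have "int (nGamma V E n u v) * int (nGamma V E n v u) = int (card A) * int (card (?X - A))"
      using prod by (metis of_nat_mult)
    also have "\<dots> = int (card S) * int k ^ m * ((int k - int (card S)) * int k ^ m)"
      using cA cXA ci by (simp add: algebra_simps)
    finally show ?thesis .
  qed
  show ?thesis
    unfolding nm1 kn p2 main nG1 nG2 ci using final_arith[of "int (card S)" "int k ^ m" "int k"] by simp
qed

end
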